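(* Let $A$ be any of $L_d$, $C_d$ ($d\in\{2,3,\dots\}$), or $L_\infty$. Let $p\in[1,\infty)\setminus\{2\}$, let $(X,\mathcal{B},\mu)$ be a $\sigma$-finite measure space, and let $\rho\colon A\to L(L^p(X,\mu))$ be a representation. (1) If $p>2$, $\rho$ is forward isometric, and $\|\rho(s_\lambda)\|\le\|\lambda\|_p$ for all $\lambda$, then $\rho$ is disjoint. (2) If $p<2$, $\rho$ is strongly forward isometric and $\rho$ is $p$-standard on $\mathrm{span}(s_1,s_2,\dots)$, then $\rho$ is disjoint.
   Context: $L_d$ is the universal complex unital algebra generated by $s_1,\dots,s_d,t_1,\dots,t_d$ with $t_js_j=1$, $t_js_k=0$ ($j\ne k$), $\sum_js_jt_j=1$; $C_d$ has the same generators with only $t_js_j=1$, $t_js_k=0$ ($j\ne k$); $L_\infty$ is on $s_1,s_2,\dots,t_1,t_2,\dots$ with $t_js_j=1$, $t_js_k=0$ ($j\ne k$). A representation is a unital algebra homomorphism into $L(E)$. For $\lambda\in\mathbb{C}^d$ (finitely supported sequences if $A=L_\infty$), $s_\lambda=\sum_j\lambda_js_j$. $\rho$ is forward isometric if each $\rho(s_j)$ is an isometry; strongly forward isometric if moreover every $\rho(s_\lambda)$ is a scalar multiple of an isometry; $p$-standard on $\mathrm{span}(s_j)$ if $\|\rho(s_\lambda)\|=\|\lambda\|_p$ for all $\lambda$; disjoint if there are pairwise disjoint measurable $X_j\subset X$ with $\mathrm{ran}(\rho(s_j))\subset L^p(X_j,\mu)$, where $L^p(E,\mu)$ denotes functions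 vanishing a.e. off $E$. *)

theory Defs
  imports "HOL-Analysis.Analysis"
begin

datatype alg = Ld nat | Cd nat | Linf

fun gens :: "alg \<Rightarrow> nat set" where
  "gens (Ld d) = {..<d}"
| "gens (Cd d) = {..<d}"
| "gens Linf = UNIV"

fun admissible_alg :: "alg \<Rightarrow> bool" where
  "admissible_alg (Ld d) = (d \<ge> 2)"
| "admissible_alg (Cd d) = (d \<ge> 2)"
| "admissible_alg Linf = True"

text \<open>L^p(X,mu) of complex functions; elements are represented by functions,
  identified up to equality almost everywhere.\<close>
definition Lp :: "'a measure \<Rightarrow> real \<Rightarrow> ('a \<Rightarrow> complex) set" where
  "Lp M p = {f. f \<in> borel_measurable M \<and> integrable M (\<lambda>x. norm (f x) powr p)}"

definition Lpnorm :: "'a measure \<Rightarrow> real \<Rightarrow> ('a \<Rightarrow> complex) \<Rightarrow> real" where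
  "Lpnorm M p f = (\<integral>x. norm (f x) powr p \<partial>M) powr (1 / p)"

definition aeq :: "'a measure \<Rightarrow> ('a \<Rightarrow> complex) \<Rightarrow> ('a \<Rightarrow> complex) \<Rightarrow> bool" where
  "aeq M f g = (AE x in M. f x = g x)"

text \<open>Bounded linear operators on L^p(X,mu) (elements of L(L^p(X,mu))),
  represented by maps on functions that respect a.e. equality.\<close>
definition bop :: "'a measure \<Rightarrow> real \<Rightarrow> (('a \<Rightarrow> complex) \<Rightarrow> ('a \<Rightarrow> complex)) \<Rightarrow> bool" where
  "bop M p T =
    ((\<forall>f\<in>Lp M p. T f \<in> Lp M p)
     \<and> (\<forall>f\<in>Lp M p. \<forall>g\<in>Lp M p. aeq M f g \<longrightarrow> aeq M (T f) (T g))
     \<and> (\<forall>f\<in>Lp M p. \<forall>g\<in>Lp M p. \<forall>c::complex.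
          aeq M (T (\<lambda>x. c * f x + g x)) (\<lambda>x. c * T f x + T g x))
     \<and> (\<exists>K. \<forall>f\<in>Lp M p. Lpnorm M p (T f) \<le> K * Lpnorm M p f))"

definition opnorm :: "'a measure \<Rightarrow> real \<Rightarrow> (('a \<Rightarrow> complex) \<Rightarrow> ('a \<Rightarrow> complex)) \<Rightarrow> real" where
  "opnorm M p T = Sup {Lpnorm M p (T f) | f. f \<in> Lp M p \<and> Lpnorm M p f \<le> 1}"

definition isometry_op :: "'a measure \<Rightarrow> real \<Rightarrow> (('a \<Rightarrow> complex) \<Rightarrow> ('a \<Rightarrow> complex)) \<Rightarrow> bool" where
  "isometry_op M p T = (bop M p T \<and> (\<forall>f\<in>Lp M p. Lpnorm M p (T f) = Lpnorm M p f))"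

text \<open>A representation rho of A on L^p(X,mu) is (by the universal property of A)
  the same as a family of operators S j = rho(s_j), T j = rho(t_j) in L(L^p)
  satisfying the defining relations of A.\<close>
definition is_rep :: "alg \<Rightarrow> 'a measure \<Rightarrow> real \<Rightarrow>
    (nat \<Rightarrow> ('a \<Rightarrow> complex) \<Rightarrow> ('a \<Rightarrow> complex)) \<Rightarrow>
    (nat \<Rightarrow> ('a \<Rightarrow> complex) \<Rightarrow> ('a \<Rightarrow> complex)) \<Rightarrow> bool" where
  "is_rep A M p S T =
    ((\<forall>j\<in>gens A. bop M p (S j) \<and> bop M p (T j))
     \<and> (\<forall>j\<in>gens A. \<forall>k\<in>gens A. \<forall>f\<in>Lp M p.
          aeq M (T j (S k f)) (if j = k then f else (\<lambda>_. 0)))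
     \<and> (case A of Ld d \<Rightarrow>
          (\<forall>f\<in>Lp M p. aeq M (\<lambda>x. \<Sum>j\<in>gens A. S j (T j f) x) f)
        | _ \<Rightarrow> True))"

definition coeffs :: "alg \<Rightarrow> (nat \<Rightarrow> complex) \<Rightarrow> bool" where
  "coeffs A lam = (finite {j. lam j \<noteq> 0} \<and> {j. lam j \<noteq> 0} \<subseteq> gens A)"

definition seq_pnorm :: "real \<Rightarrow> (nat \<Rightarrow> complex) \<Rightarrow> real" where
  "seq_pnorm p lam = (\<Sum>j\<in>{j. lam j \<noteq> 0}. norm (lam j) powr p) powr (1 / p)"

definition s_lam :: "(nat \<Rightarrow> ('a \<Rightarrow> complex) \<Rightarrow> ('a \<Rightarrow> complex)) \<Rightarrow> (nat \<Rightarrow> complex) \<Rightarrow>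
    ('a \<Rightarrow> complex) \<Rightarrow> ('a \<Rightarrow> complex)" where
  "s_lam S lam f = (\<lambda>x. \<Sum>j\<in>{j. lam j \<noteq> 0}. lam j * S j f x)"

definition forward_isometric where
  "forward_isometric A M p S = (\<forall>j\<in>gens A. isometry_op M p (S j))"

definition strongly_forward_isometric where
  "strongly_forward_isometric A M p S =
    (forward_isometric A M p S \<and>
     (\<forall>lam. coeffs A lam \<longrightarrow>
        (\<exists>c::complex. \<exists>V. isometry_op M p V \<and>
           (\<forall>f\<in>Lp M p. aeq M (s_lam S lam f) (\<lambda>x. c * V f x)))))"

definition p_standard where
  "p_standard A M p S =
    (\<forall>lam. coeffs A lam \<longrightarrow> opnorm M p (s_lam S lam) = seq_pnorm p lam)"

definition disjoint_rep where
  "disjoint_rep A M p S =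
    (\<exists>X::nat \<Rightarrow> 'a set. (\<forall>j\<in>gens A. X j \<in> sets M) \<and> disjoint_family_on X (gens A)
       \<and> (\<forall>j\<in>gens A. \<forall>f\<in>Lp M p. AE x in M. x \<notin> X j \<longrightarrow> S j f x = 0))"

end

theory Submission
  imports Defs
begin


lemma powr_concave: assumes "0 < q" "q \<le> 1" shows "concave_on {0<..} (\<lambda>x::real. x powr q)"
proof (rule f''_le0_imp_concave[where f'="\<lambda>x. q * x powr (q - 1)" and f''="\<lambda>x. q * ((q - 1) * x powr (q - 2))"])
  fix x :: real assume x: "x \<in> {0<..}"
  show "((\<lambda>x. x powr q) has_real_derivative q * x powr (q - 1)) (at x)"
    using x by (auto intro!: derivative_eq_intros)
  show "((\<lambda>x. q * x powr (q - 1)) has_real_derivative q * ((q - 1) * x powr (q - 2))) (at x)"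
    using x by (auto intro!: derivative_eq_intros simp: algebra_simps)
  show "q * ((q - 1) * x powr (q - 2)) \<le> 0"
    using assms x by (intro mult_nonneg_nonpos mult_nonpos_nonneg) auto
qed auto

lemma mid_convex: fixes a b q :: real assumes "1 \<le> q" "0 < a" "0 < b"
  shows "2 * ((a+b)/2) powr q \<le> a powr q + b powr q"
proof -
  have "((1 - 1/2) *\<^sub>R a + (1/2) *\<^sub>R b) powr q \<le> (1 - 1/2) * a powr q + (1/2) * b powr q"
    by (rule convex_onD[OF powr_convex[OF assms(1)]]) (use assms in auto)
  then show ?thesis by (simp add: field_simps)
qed

lemma mid_concave: fixes a b q :: real assumes "0 < q" "q \<le> 1" "0 < a" "0 < b"
  shows "a powr q + b powr q \<le> 2 * ((a+b)/2) powr q"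
proof -
  have "(1 - 1/2) * a powr q + (1/2) * b powr q \<le> ((1 - 1/2) *\<^sub>R a + (1/2) *\<^sub>R b) powr q"
    by (rule concave_onD[OF powr_concave[OF assms(1,2)]]) (use assms in auto)
  then show ?thesis by (simp add: field_simps)
qed

lemma superadd: fixes x y q :: real assumes "1 < q" "0 < x" "0 < y"
  shows "x powr q + y powr q < (x+y) powr q"
proof -
  have "x powr q = x * x powr (q - 1)" using assms by (simp add: powr_mult_base)
  also have "\<dots> < x * (x+y) powr (q - 1)"
    using assms by (intro mult_strict_left_mono powr_less_mono2) auto
  finally have 1: "x powr q < x * (x+y) powr (q - 1)" .
  have "y powr q = y * y powr (q - 1)" using assms by (simp add: powr_mult_base)
  also have "\<dots> < y * (x+y) powr (q - 1)"
    using assms by (intro mult_strict_left_mono powr_less_mono2) auto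
  finally have 2: "y powr q < y * (x+y) powr (q - 1)" .
  have "(x+y) powr q = (x + y) * (x+y) powr (q - 1)" using assms by (simp add: powr_mult_base)
  then show ?thesis using 1 2 by (simp add: distrib_right)
qed

lemma subadd: fixes x y q :: real assumes "0 < q" "q < 1" "0 < x" "0 < y"
  shows "(x+y) powr q < x powr q + y powr q"
proof -
  have "x * (x+y) powr (q - 1) < x * x powr (q - 1)"
    using assms by (intro mult_strict_left_mono powr_less_mono2_neg) auto
  also have "x * x powr (q - 1) = x powr q" using assms by (simp add: powr_mult_base)
  finally have 1: "x * (x+y) powr (q - 1) < x powr q" .
  have "y * (x+y) powr (q - 1) < y * y powr (q - 1)"
    using assms by (intro mult_strict_left_mono powr_less_mono2_neg) auto
  also have "y * y powr (q - 1) = y powr q" using assms by (simp add: powr_mult_base)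
  finally have 2: "y * (x+y) powr (q - 1) < y powr q" .
  have "(x+y) powr q = (x + y) * (x+y) powr (q - 1)" using assms by (simp add: powr_mult_base)
  then show ?thesis using 1 2 by (simp add: distrib_right)
qed

lemma parallelogram_c: "(cmod (u+v))^2 + (cmod (u-v))^2 = 2 * ((cmod u)^2 + (cmod v)^2)"
  unfolding cmod_power2 by (simp add: power2_eq_square algebra_simps)

lemma powr_sq: assumes "0 \<le> (x::real)" shows "x powr p = (x^2) powr (p/2)"
proof (cases "x = 0")
  case True then show ?thesis by simp
next
  case False
  then have "x^2 = x powr 2" using assms by (simp add: powr_numeral)
  then show ?thesis by (simp add: powr_powr)
qed

lemma mid_convex0: fixes a b q :: real assumes "1 \<le> q" "0 \<le> a" "0 \<le> b"
  shows "2 * ((a+b)/2) powr q \<le> a powr q + b powr q"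
proof -
  have 2: "2 \<le> (2::real) powr q" using powr_mono[OF assms(1), of 2] by simp
  have one: "2 * (c/2) powr q \<le> c powr q" if "0 \<le> c" for c :: real
  proof -
    have "2 * (c/2) powr q = 2 * (c powr q / 2 powr q)" using that by (simp add: powr_divide)
    also have "\<dots> \<le> c powr q" using mult_left_mono[OF 2, of "c powr q"] by (simp add: field_simps mult.commute)
    finally show ?thesis .
  qed
  show ?thesis
  proof (cases "a = 0 \<or> b = 0")
    case True then show ?thesis using one assms by auto
  next
    case False then show ?thesis using mid_convex[of q a b] assms by auto
  qed
qed

lemma mid_concave0: fixes a b q :: real assumes "0 < q" "q \<le> 1" "0 \<le> a" "0 \<le> b"
  shows "a powr q + b powr q \<le> 2 * ((a+b)/2) powr q"
proof -
  have 2: "(2::real) powr q \<le> 2" using powr_mono[OF assms(2), of 2] by simp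
  have one: "c powr q \<le> 2 * (c/2) powr q" if "0 \<le> c" for c :: real
  proof -
    have "c powr q \<le> 2 * (c powr q / 2 powr q)" using mult_left_mono[OF 2, of "c powr q"] by (simp add: field_simps mult.commute)
    also have "\<dots> = 2 * (c/2) powr q" using that by (simp add: powr_divide)
    finally show ?thesis .
  qed
  show ?thesis
  proof (cases "a = 0 \<or> b = 0")
    case True then show ?thesis using one assms by auto
  next
    case False then show ?thesis using mid_concave[of q a b] assms by auto
  qed
qed

lemma clark_gt:
  fixes u v :: complex and p :: real
  assumes p: "p > 2" and uv: "u \<noteq> 0" "v \<noteq> 0"
  shows "2 * (cmod u powr p + cmod v powr p) < cmod (u+v) powr p + cmod (u-v) powr p"
proof -
  define q where "q = p/2"
  have q: "1 < q" using p by (simp add: q_def)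
  define a where "a = (cmod (u+v))^2"
  define b where "b = (cmod (u-v))^2"
  define s where "s = (cmod u)^2 + (cmod v)^2"
  have ab: "(a + b)/2 = s" using parallelogram_c[of u v] by (simp add: a_def b_def s_def)
  have "cmod u powr p + cmod v powr p = ((cmod u)^2) powr q + ((cmod v)^2) powr q"
    using powr_sq[of "cmod u" p] powr_sq[of "cmod v" p] by (simp add: q_def)
  also have "\<dots> < s powr q" unfolding s_def using uv q by (intro superadd) auto
  finally have 1: "cmod u powr p + cmod v powr p < s powr q" .
  have "2 * s powr q \<le> a powr q + b powr q"
    using mid_convex0[of q a b] q ab by (simp add: a_def b_def)
  also have "\<dots> = cmod (u+v) powr p + cmod (u-v) powr p"
    using powr_sq[of "cmod (u+v)" p] powr_sq[of "cmod (u-v)" p] by (simp add: q_def a_def b_def)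
  finally have 3: "2 * s powr q \<le> cmod (u+v) powr p + cmod (u-v) powr p" .
  have "2 * (cmod u powr p + cmod v powr p) < 2 * s powr q" using 1 by simp
  then show ?thesis using 3 by simp
qed

lemma clark_gt0:
  fixes u v :: complex and p :: real
  assumes p: "p > 2"
  shows "2 * (cmod u powr p + cmod v powr p) \<le> cmod (u+v) powr p + cmod (u-v) powr p"
proof (cases "u = 0 \<or> v = 0")
  case True then show ?thesis by (auto simp: norm_minus_commute)
next
  case False then show ?thesis using clark_gt[OF p, of u v] by auto
qed

lemma clark_lt:
  fixes u v :: complex and p :: real
  assumes p: "0 < p" "p < 2" and uv: "u \<noteq> 0" "v \<noteq> 0"
  shows "cmod (u+v) powr p + cmod (u-v) powr p < 2 * (cmod u powr p + cmod v powr p)"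
proof -
  define q where "q = p/2"
  have q: "0 < q" "q < 1" using p by (auto simp: q_def)
  define a where "a = (cmod (u+v))^2"
  define b where "b = (cmod (u-v))^2"
  define s where "s = (cmod u)^2 + (cmod v)^2"
  have ab: "(a + b)/2 = s" using parallelogram_c[of u v] by (simp add: a_def b_def s_def)
  have "s powr q < ((cmod u)^2) powr q + ((cmod v)^2) powr q" 
    unfolding s_def using uv q by (intro subadd) auto
  also have "\<dots> = cmod u powr p + cmod v powr p"
    using powr_sq[of "cmod u" p] powr_sq[of "cmod v" p] by (simp add: q_def)
  finally have 1: "s powr q < cmod u powr p + cmod v powr p" .
  have "cmod (u+v) powr p + cmod (u-v) powr p = a powr q + b powr q"
    using powr_sq[of "cmod (u+v)" p] powr_sq[of "cmod (u-v)" p] by (simp add: q_def a_def b_def)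
  also have "\<dots> \<le> 2 * s powr q"
    using mid_concave0[of q a b] q ab by (simp add: a_def b_def)
  finally have 3: "cmod (u+v) powr p + cmod (u-v) powr p \<le> 2 * s powr q" .
  have "2 * s powr q < 2 * (cmod u powr p + cmod v powr p)" using 1 by simp
  then show ?thesis using 3 by simp
qed

lemma clark_lt0:
  fixes u v :: complex and p :: real
  assumes p: "0 < p" "p < 2"
  shows "cmod (u+v) powr p + cmod (u-v) powr p \<le> 2 * (cmod u powr p + cmod v powr p)"
proof (cases "u = 0 \<or> v = 0")
  case True then show ?thesis by (auto simp: norm_minus_commute)
next
  case False then show ?thesis using clark_lt[OF p, of u v] by auto
qed




lemma Lp_meas: "f \<in> Lp M p \<Longrightarrow> f \<in> borel_measurable M"
  by (simp add: Lp_def)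
lemma Lp_int: "f \<in> Lp M p \<Longrightarrow> integrable M (\<lambda>x. norm (f x) powr p)"
  by (simp add: Lp_def)

lemma powr_add_bound: fixes a b :: complex assumes "0 \<le> p"
  shows "cmod (a+b) powr p \<le> 2 powr p * (cmod a powr p + cmod b powr p)"
proof -
  have "cmod (a+b) \<le> 2 * max (cmod a) (cmod b)" using norm_triangle_ineq[of a b] by linarith
  then have "cmod (a+b) powr p \<le> (2 * max (cmod a) (cmod b)) powr p"
    using assms by (intro powr_mono2) auto
  also have "\<dots> = 2 powr p * max (cmod a) (cmod b) powr p" by (simp add: powr_mult)
  also have "max (cmod a) (cmod b) powr p \<le> cmod a powr p + cmod b powr p"
    by (cases "cmod a \<le> cmod b") (auto simp: max_def)
  then have "2 powr p * max (cmod a) (cmod b) powr p \<le> 2 powr p * (cmod a powr p + cmod b powr p)"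
    by (intro mult_left_mono) auto
  finally show ?thesis .
qed

lemma Lp_add: assumes "0 \<le> p" "f \<in> Lp M p" "g \<in> Lp M p"
  shows "(\<lambda>x. f x + g x) \<in> Lp M p"
proof -
  have m: "f \<in> borel_measurable M" "g \<in> borel_measurable M" using assms Lp_meas by auto
  have "integrable M (\<lambda>x. 2 powr p * (cmod (f x) powr p + cmod (g x) powr p))"
    using assms Lp_int by (intro integrable_mult_right Bochner_Integration.integrable_add) auto
  then have "integrable M (\<lambda>x. cmod (f x + g x) powr p)"
    by (rule Bochner_Integration.integrable_bound) (use m powr_add_bound[OF assms(1)] in auto)
  then show ?thesis using m by (simp add: Lp_def)
qed

lemma Lp_scale: assumes "0 \<le> p" "f \<in> Lp M p"
  shows "(\<lambda>x. c * f x) \<in> Lp M p"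
proof -
  have m: "f \<in> borel_measurable M" using assms Lp_meas by auto
  have "integrable M (\<lambda>x. cmod c powr p * cmod (f x) powr p)"
    using assms Lp_int by (intro integrable_mult_right) auto
  then have "integrable M (\<lambda>x. cmod (c * f x) powr p)"
    by (simp add: norm_mult powr_mult)
  then show ?thesis using m by (simp add: Lp_def)
qed

lemma Lp_diff: assumes "0 \<le> p" "f \<in> Lp M p" "g \<in> Lp M p"
  shows "(\<lambda>x. f x - g x) \<in> Lp M p"
  using Lp_add[OF assms(1,2) Lp_scale[OF assms(1,3), of "-1"]] by simp

lemma Lp_zero: "(\<lambda>x. 0) \<in> Lp M p"
  by (simp add: Lp_def)

lemma Lpnorm_powr: assumes "0 < p" shows "Lpnorm M p f powr p = (\<integral>x. norm (f x) powr p \<partial>M)"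
proof -
  have "0 \<le> (\<integral>x. norm (f x) powr p \<partial>M)" by (intro Bochner_Integration.integral_nonneg) auto
  then show ?thesis using assms by (simp add: Lpnorm_def powr_powr)
qed

lemma Lpnorm_nonneg: "0 \<le> Lpnorm M p f" by (simp add: Lpnorm_def)

lemma Lpnorm_scale: assumes "0 < p" shows "Lpnorm M p (\<lambda>x. c * f x) = cmod c * Lpnorm M p f"
proof -
  have "(\<integral>x. norm (c * f x) powr p \<partial>M) = cmod c powr p * (\<integral>x. norm (f x) powr p \<partial>M)"
    by (simp add: norm_mult powr_mult)
  moreover have "0 \<le> (\<integral>x. norm (f x) powr p \<partial>M)" by (intro Bochner_Integration.integral_nonneg) auto
  ultimately show ?thesis using assms by (simp add: Lpnorm_def powr_mult powr_powr)
qed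

lemma Lpnorm_cong: assumes "f \<in> borel_measurable M" "g \<in> borel_measurable M" "AE x in M. f x = g x"
  shows "Lpnorm M p f = Lpnorm M p g"
proof -
  have "(\<integral>x. norm (f x) powr p \<partial>M) = (\<integral>x. norm (g x) powr p \<partial>M)"
    using assms by (intro integral_cong_AE) auto
  then show ?thesis by (simp add: Lpnorm_def)
qed

lemma Lpnorm_zero_ae: assumes "0 < p" "f \<in> Lp M p" "Lpnorm M p f = 0"
  shows "AE x in M. f x = 0"
proof -
  have "(\<integral>x. norm (f x) powr p \<partial>M) = 0" using Lpnorm_powr[OF assms(1), of M f] assms(1,3) by simp
  then have "AE x in M. norm (f x) powr p = 0"
    using Lp_int[OF assms(2)] by (subst (asm) integral_nonneg_eq_0_iff_AE) auto
  then show ?thesis by eventually_elim simp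
qed

lemma bop_Lp: "bop M p T \<Longrightarrow> f \<in> Lp M p \<Longrightarrow> T f \<in> Lp M p"
  by (simp add: bop_def)

lemma bop_cong: "bop M p T \<Longrightarrow> f \<in> Lp M p \<Longrightarrow> g \<in> Lp M p \<Longrightarrow> AE x in M. f x = g x
   \<Longrightarrow> AE x in M. T f x = T g x"
  by (simp add: bop_def aeq_def)

lemma bop_lin: "bop M p T \<Longrightarrow> f \<in> Lp M p \<Longrightarrow> g \<in> Lp M p
   \<Longrightarrow> AE x in M. T (\<lambda>x. c * f x + g x) x = c * T f x + T g x"
  by (simp add: bop_def aeq_def)

lemma bop_zero: assumes "bop M p T" shows "AE x in M. T (\<lambda>x. 0) x = 0"
proof -
  have "AE x in M. T (\<lambda>x. 1 * 0 + 0) x = 1 * T (\<lambda>x. 0) x + T (\<lambda>x. 0) x"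
    by (rule bop_lin[OF assms Lp_zero Lp_zero])
  then show ?thesis by eventually_elim simp
qed

lemma bop_add: assumes "bop M p T" "f \<in> Lp M p" "g \<in> Lp M p"
  shows "AE x in M. T (\<lambda>x. f x + g x) x = T f x + T g x"
  using bop_lin[OF assms, of 1] by simp

lemma bop_scale: assumes "bop M p T" "f \<in> Lp M p"
  shows "AE x in M. T (\<lambda>x. c * f x) x = c * T f x"
  using bop_lin[OF assms Lp_zero, of c] bop_zero[OF assms(1)] by eventually_elim simp

lemma key_gt2:
  assumes p: "2 < p" and u: "u \<in> Lp M p" and v: "v \<in> Lp M p"
    and le: "(\<integral>x. cmod (u x + v x) powr p \<partial>M) + (\<integral>x. cmod (u x - v x) powr p \<partial>M)
        \<le> 2 * ((\<integral>x. cmod (u x) powr p \<partial>M) + (\<integral>x. cmod (v x) powr p \<partial>M))"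
  shows "AE x in M. u x * v x = 0"
proof -
  define G where "G x = cmod (u x + v x) powr p + cmod (u x - v x) powr p
     - 2 * (cmod (u x) powr p + cmod (v x) powr p)" for x
  have p0: "0 \<le> p" using p by simp
  have iG: "integrable M G" unfolding G_def
    using Lp_int[OF Lp_add[OF p0 u v]] Lp_int[OF Lp_diff[OF p0 u v]] Lp_int[OF u] Lp_int[OF v]
    by (intro Bochner_Integration.integrable_diff Bochner_Integration.integrable_add integrable_mult_right) auto
  have G0: "0 \<le> G x" for x using clark_gt0[OF p, of "u x" "v x"] by (simp add: G_def)
  have "integral\<^sup>L M G = (\<integral>x. cmod (u x + v x) powr p \<partial>M) + (\<integral>x. cmod (u x - v x) powr p \<partial>M)
        - 2 * ((\<integral>x. cmod (u x) powr p \<partial>M) + (\<integral>x. cmod (v x) powr p \<partial>M))"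
    unfolding G_def
    using Lp_int[OF Lp_add[OF p0 u v]] Lp_int[OF Lp_diff[OF p0 u v]] Lp_int[OF u] Lp_int[OF v]
    by (simp add: Bochner_Integration.integral_diff Bochner_Integration.integral_add
        Bochner_Integration.integrable_add integrable_mult_right)
  then have "integral\<^sup>L M G \<le> 0" using le by simp
  moreover have "0 \<le> integral\<^sup>L M G" using G0 by (intro Bochner_Integration.integral_nonneg) auto
  ultimately have "integral\<^sup>L M G = 0" by simp
  then have "AE x in M. G x = 0" using iG G0 by (subst (asm) integral_nonneg_eq_0_iff_AE) auto
  then show ?thesis
  proof eventually_elim
    case (elim x)
    show ?case
    proof (rule ccontr)
      assume "u x * v x \<noteq> 0"
      then have "0 < G x" using clark_gt[OF p, of "u x" "v x"] by (simp add: G_def)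
      then show False using elim by simp
    qed
  qed
qed

lemma key_lt2:
  assumes p: "0 < p" "p < 2" and u: "u \<in> Lp M p" and v: "v \<in> Lp M p"
    and le: "2 * ((\<integral>x. cmod (u x) powr p \<partial>M) + (\<integral>x. cmod (v x) powr p \<partial>M))
      \<le> (\<integral>x. cmod (u x + v x) powr p \<partial>M) + (\<integral>x. cmod (u x - v x) powr p \<partial>M)"
  shows "AE x in M. u x * v x = 0"
proof -
  define G where "G x = 2 * (cmod (u x) powr p + cmod (v x) powr p) - 
     (cmod (u x + v x) powr p + cmod (u x - v x) powr p)" for x
  have p0: "0 \<le> p" using p by simp
  have iG: "integrable M G" unfolding G_def
    using Lp_int[OF Lp_add[OF p0 u v]] Lp_int[OF Lp_diff[OF p0 u v]] Lp_int[OF u] Lp_int[OF v]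
    by (intro Bochner_Integration.integrable_diff Bochner_Integration.integrable_add integrable_mult_right) auto
  have G0: "0 \<le> G x" for x using clark_lt0[OF p, of "u x" "v x"] by (simp add: G_def)
  have "integral\<^sup>L M G = 2 * ((\<integral>x. cmod (u x) powr p \<partial>M) + (\<integral>x. cmod (v x) powr p \<partial>M))
      - ((\<integral>x. cmod (u x + v x) powr p \<partial>M) + (\<integral>x. cmod (u x - v x) powr p \<partial>M))"
    unfolding G_def
    using Lp_int[OF Lp_add[OF p0 u v]] Lp_int[OF Lp_diff[OF p0 u v]] Lp_int[OF u] Lp_int[OF v]
    by (simp add: Bochner_Integration.integral_diff Bochner_Integration.integral_add
        Bochner_Integration.integrable_add integrable_mult_right)
  then have "integral\<^sup>L M G \<le> 0" using le by simp
  moreover have "0 \<le> integral\<^sup>L M G" using G0 by (intro Bochner_Integration.integral_nonneg) auto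
  ultimately have "integral\<^sup>L M G = 0" by simp
  then have "AE x in M. G x = 0" using iG G0 by (subst (asm) integral_nonneg_eq_0_iff_AE) auto
  then show ?thesis
  proof eventually_elim
    case (elim x)
    show ?case
    proof (rule ccontr)
      assume "u x * v x \<noteq> 0"
      then have "0 < G x" using clark_lt[OF p, of "u x" "v x"] by (simp add: G_def)
      then show False using elim by simp
    qed
  qed
qed




lemma normalize_pair:
  assumes p: "0 < p" and bj: "bop M p Sj" and bk: "bop M p Sk"
    and H: "\<And>f. f \<in> Lp M p \<Longrightarrow> Lpnorm M p f = 1 \<Longrightarrow> AE x in M. Sj f x * Sk f x = 0"
    and f: "f \<in> Lp M p"
  shows "AE x in M. Sj f x * Sk f x = 0"
proof (cases "Lpnorm M p f = 0")
  case True
  then have f0: "AE x in M. f x = 0" using Lpnorm_zero_ae[OF p f] by simp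
  have "AE x in M. Sj f x = Sj (\<lambda>x. 0) x" by (rule bop_cong[OF bj f Lp_zero f0])
  moreover have "AE x in M. Sj (\<lambda>x. 0) x = 0" by (rule bop_zero[OF bj])
  ultimately show ?thesis by eventually_elim simp
next
  case False
  define r where "r = Lpnorm M p f"
  have r: "0 < r" using False Lpnorm_nonneg[of M p f] by (simp add: r_def)
  define g where "g = (\<lambda>x. complex_of_real (1/r) * f x)"
  have g: "g \<in> Lp M p" unfolding g_def using p f by (intro Lp_scale) auto
  have "Lpnorm M p g = cmod (complex_of_real (1/r)) * Lpnorm M p f" unfolding g_def by (rule Lpnorm_scale[OF p])
  then have ng: "Lpnorm M p g = 1" using r by (simp add: r_def[symmetric] norm_divide)
  have fg: "f = (\<lambda>x. complex_of_real r * g x)" using r by (auto simp: g_def)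
  have "AE x in M. Sj g x * Sk g x = 0" by (rule H[OF g ng])
  moreover have "AE x in M. Sj (\<lambda>x. complex_of_real r * g x) x = complex_of_real r * Sj g x"
    by (rule bop_scale[OF bj g])
  moreover have "AE x in M. Sk (\<lambda>x. complex_of_real r * g x) x = complex_of_real r * Sk g x"
    by (rule bop_scale[OF bk g])
  ultimately show ?thesis by eventually_elim (auto simp: fg)
qed

lemma polarize:
  assumes p: "0 \<le> p" and bj: "bop M p Sj" and bk: "bop M p Sk"
    and H: "\<And>h. h \<in> Lp M p \<Longrightarrow> AE x in M. Sj h x * Sk h x = 0"
    and f: "f \<in> Lp M p" and g: "g \<in> Lp M p"
  shows "AE x in M. Sj f x * Sk g x = 0"
proof -
  have fg: "(\<lambda>x. f x + g x) \<in> Lp M p" using Lp_add[OF p f g] .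
  have "AE x in M. Sj f x * Sk f x = 0" by (rule H[OF f])
  moreover have "AE x in M. Sj g x * Sk g x = 0" by (rule H[OF g])
  moreover have "AE x in M. Sj (\<lambda>x. f x + g x) x * Sk (\<lambda>x. f x + g x) x = 0" by (rule H[OF fg])
  moreover have "AE x in M. Sj (\<lambda>x. f x + g x) x = Sj f x + Sj g x" by (rule bop_add[OF bj f g])
  moreover have "AE x in M. Sk (\<lambda>x. f x + g x) x = Sk f x + Sk g x" by (rule bop_add[OF bk f g])
  ultimately show ?thesis
  proof eventually_elim
    case (elim x)
    define a where "a = Sj f x" define b where "b = Sj g x"
    define a' where "a' = Sk f x" define b' where "b' = Sk g x"
    have 1: "a * a' = 0" "b * b' = 0" "(a + b) * (a' + b') = 0"
      using elim by (simp_all add: a_def b_def a'_def b'_def)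
    have e: "(a+b)*(a'+b') = a*a' + (a*b' + b*a') + b*b'" by (simp add: algebra_simps)
    have "a*b' + b*a' = 0" using e 1 by (metis add.left_neutral add.right_neutral)
    then have "a * b' = - (b * a')" by (simp add: eq_neg_iff_add_eq_0)
    then have "(a * b') * (a * b') = (a * b') * (- (b * a'))" by simp
    also have "\<dots> = - ((a * a') * (b * b'))" by (simp add: algebra_simps)
    finally have "(a * b') * (a * b') = - ((a * a') * (b * b'))" .
    then have "(a * b') * (a * b') = 0" using 1 by simp
    then show ?case by (simp add: a_def b'_def)
  qed
qed

lemma s_lam_pair:
  assumes "j \<noteq> k" "e \<noteq> 0"
  shows "s_lam S (\<lambda>i. if i = j then 1 else if i = k then e else 0) f = (\<lambda>x. S j f x + e * S k f x)"
proof -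
  have "{i. (if i = j then 1 else if i = k then e else 0) \<noteq> 0} = {j, k}" using assms by auto
  then show ?thesis using assms by (simp add: s_lam_def)
qed

lemma pair_coeffs:
  assumes "j \<in> gens A" "k \<in> gens A" "j \<noteq> k" "e \<noteq> 0"
  shows "coeffs A (\<lambda>i. if i = j then 1 else if i = k then e else 0)"
proof -
  have "{i. (if i = j then 1 else if i = k then e else 0) \<noteq> 0} = {j, k}" using assms by auto
  then show ?thesis using assms by (simp add: coeffs_def)
qed

lemma pair_seq_pnorm:
  assumes "j \<noteq> k" "cmod e = 1"
  shows "seq_pnorm p (\<lambda>i. if i = j then 1 else if i = k then e else 0) = 2 powr (1/p)"
proof -
  have "e \<noteq> 0" using assms by auto
  then have "{i. (if i = j then 1 else if i = k then e else 0) \<noteq> 0} = {j, k}" using assms by auto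
  then show ?thesis using assms by (simp add: seq_pnorm_def)
qed

lemma Lpnorm_add_le:
  assumes p: "0 < p" and u: "u \<in> Lp M p" and v: "v \<in> Lp M p"
  shows "Lpnorm M p (\<lambda>x. u x + v x) \<le> (2 powr p * (Lpnorm M p u powr p + Lpnorm M p v powr p)) powr (1/p)"
proof -
  have "(\<integral>x. cmod (u x + v x) powr p \<partial>M) \<le> (\<integral>x. 2 powr p * (cmod (u x) powr p + cmod (v x) powr p) \<partial>M)"
    using Lp_int[OF Lp_add[OF _ u v]] Lp_int[OF u] Lp_int[OF v] p powr_add_bound[of p]
    by (intro integral_mono integrable_mult_right Bochner_Integration.integrable_add) auto
  also have "\<dots> = 2 powr p * (Lpnorm M p u powr p + Lpnorm M p v powr p)"
    using Lp_int[OF u] Lp_int[OF v] by (simp add: Lpnorm_powr[OF p])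
  finally have "(\<integral>x. cmod (u x + v x) powr p \<partial>M) \<le> 2 powr p * (Lpnorm M p u powr p + Lpnorm M p v powr p)" .
  then show ?thesis unfolding Lpnorm_def using p
    by (intro powr_mono2) (auto intro: Bochner_Integration.integral_nonneg)
qed

lemma opnorm_ge:
  assumes "f \<in> Lp M p" "Lpnorm M p f \<le> 1"
    and B: "\<And>g. g \<in> Lp M p \<Longrightarrow> Lpnorm M p g \<le> 1 \<Longrightarrow> Lpnorm M p (Tt g) \<le> B"
  shows "Lpnorm M p (Tt f) \<le> opnorm M p Tt"
  unfolding opnorm_def
  by (rule cSup_upper) (use assms in \<open>auto intro!: bdd_aboveI[where M=B]\<close>)

lemma opnorm_eq:
  assumes "f \<in> Lp M p" "Lpnorm M p f = 1" "0 \<le> a"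
    and B: "\<And>g. g \<in> Lp M p \<Longrightarrow> Lpnorm M p (Tt g) = a * Lpnorm M p g"
  shows "opnorm M p Tt = a"
  unfolding opnorm_def
proof (rule cSup_eq_maximum)
  show "a \<in> {Lpnorm M p (Tt f) |f. f \<in> Lp M p \<and> Lpnorm M p f \<le> 1}"
    using assms by force
  fix y assume "y \<in> {Lpnorm M p (Tt f) |f. f \<in> Lp M p \<and> Lpnorm M p f \<le> 1}"
  then obtain g where "g \<in> Lp M p" "Lpnorm M p g \<le> 1" "y = Lpnorm M p (Tt g)" by auto
  then show "y \<le> a" using B assms(3) mult_left_mono[of "Lpnorm M p g" 1 a] by auto
qed




lemma int_from_Lpnorm_le: assumes "0 < p" "Lpnorm M p h \<le> 2 powr (1/p)"
  shows "(\<integral>x. cmod (h x) powr p \<partial>M) \<le> 2"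
proof -
  have "Lpnorm M p h powr p \<le> (2 powr (1/p)) powr p"
    using assms Lpnorm_nonneg by (intro powr_mono2) auto
  then show ?thesis using assms by (simp add: Lpnorm_powr powr_powr)
qed

lemma int_from_Lpnorm_eq: assumes "0 < p" "Lpnorm M p h = 2 powr (1/p)"
  shows "(\<integral>x. cmod (h x) powr p \<partial>M) = 2"
proof -
  have "Lpnorm M p h powr p = (2 powr (1/p)) powr p" using assms by simp
  also have "\<dots> = 2" using assms by (simp add: powr_powr)
  finally show ?thesis using Lpnorm_powr[OF assms(1), of M h] by simp
qed

lemma int_one: assumes "0 < p" "Lpnorm M p h = 1"
  shows "(\<integral>x. cmod (h x) powr p \<partial>M) = 1"
  using Lpnorm_powr[OF assms(1), of M h] assms by simp

lemma part1_pair: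
  assumes p: "2 < p" and fi: "forward_isometric A M p S"
    and opb: "\<forall>lam. coeffs A lam \<longrightarrow> opnorm M p (s_lam S lam) \<le> seq_pnorm p lam"
    and j: "j \<in> gens A" and k: "k \<in> gens A" and jk: "j \<noteq> k"
    and f: "f \<in> Lp M p" and nf: "Lpnorm M p f = 1"
  shows "AE x in M. S j f x * S k f x = 0"
proof -
  have p0: "0 < p" using p by simp
  have ij: "isometry_op M p (S j)" and ik: "isometry_op M p (S k)"
    using fi j k by (auto simp: forward_isometric_def)
  then have bj: "bop M p (S j)" and bk: "bop M p (S k)" by (auto simp: isometry_op_def)
  have nj: "\<And>g. g \<in> Lp M p \<Longrightarrow> Lpnorm M p (S j g) = Lpnorm M p g"
    and nk: "\<And>g. g \<in> Lp M p \<Longrightarrow> Lpnorm M p (S k g) = Lpnorm M p g"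
    using ij ik by (auto simp: isometry_op_def)
  have bound: "Lpnorm M p (\<lambda>x. S j f x + e * S k f x) \<le> 2 powr (1/p)" if e: "cmod e = 1" for e
  proof -
    let ?lam = "\<lambda>i. if i = j then 1 else if i = k then e else 0"
    have e0: "e \<noteq> 0" using e by auto
    have sl: "s_lam S ?lam = (\<lambda>g x. S j g x + e * S k g x)"
      by (rule ext) (rule s_lam_pair[OF jk e0])
    have "Lpnorm M p (\<lambda>x. S j f x + e * S k f x) \<le> opnorm M p (\<lambda>g x. S j g x + e * S k g x)"
    proof (rule opnorm_ge[where B="(2 powr p * 2) powr (1/p)"])
      show "f \<in> Lp M p" "Lpnorm M p f \<le> 1" using f nf by auto
      fix g assume g: "g \<in> Lp M p" "Lpnorm M p g \<le> 1"
      have u: "S j g \<in> Lp M p" using bop_Lp[OF bj g(1)] .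
      have v: "(\<lambda>x. e * S k g x) \<in> Lp M p" using Lp_scale[OF _ bop_Lp[OF bk g(1)]] p0 by simp
      have "Lpnorm M p (\<lambda>x. S j g x + e * S k g x)
          \<le> (2 powr p * (Lpnorm M p (S j g) powr p + Lpnorm M p (\<lambda>x. e * S k g x) powr p)) powr (1/p)"
        by (rule Lpnorm_add_le[OF p0 u v])
      also have "Lpnorm M p (\<lambda>x. e * S k g x) = Lpnorm M p g"
        using Lpnorm_scale[OF p0, of M e "S k g"] nk[OF g(1)] e by simp
      also have "Lpnorm M p (S j g) = Lpnorm M p g" using nj[OF g(1)] .
      also have "(2 powr p * (Lpnorm M p g powr p + Lpnorm M p g powr p)) powr (1/p) \<le> (2 powr p * 2) powr (1/p)"
      proof -
        have "Lpnorm M p g powr p \<le> 1 powr p" using g(2) p0 Lpnorm_nonneg by (intro powr_mono2) auto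
        then show ?thesis using p0 by (intro powr_mono2) auto
      qed
      finally show "Lpnorm M p (\<lambda>x. S j g x + e * S k g x) \<le> (2 powr p * 2) powr (1/p)" .
    qed
    also have "\<dots> \<le> seq_pnorm p ?lam" using opb pair_coeffs[OF j k jk e0] unfolding sl[symmetric] by blast
    also have "\<dots> = 2 powr (1/p)" by (rule pair_seq_pnorm[OF jk e])
    finally show ?thesis .
  qed
  have i1: "(\<integral>x. cmod (S j f x + S k f x) powr p \<partial>M) \<le> 2"
    using int_from_Lpnorm_le[OF p0 bound[of 1]] by simp
  have i2: "(\<integral>x. cmod (S j f x - S k f x) powr p \<partial>M) \<le> 2"
    using int_from_Lpnorm_le[OF p0 bound[of "-1"]] by simp
  have i3: "(\<integral>x. cmod (S j f x) powr p \<partial>M) = 1" using int_one[OF p0] nj[OF f] nf by simp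
  have i4: "(\<integral>x. cmod (S k f x) powr p \<partial>M) = 1" using int_one[OF p0] nk[OF f] nf by simp
  show ?thesis
  proof (rule key_gt2[OF p bop_Lp[OF bj f] bop_Lp[OF bk f]])
    show "(\<integral>x. cmod (S j f x + S k f x) powr p \<partial>M) + (\<integral>x. cmod (S j f x - S k f x) powr p \<partial>M)
        \<le> 2 * ((\<integral>x. cmod (S j f x) powr p \<partial>M) + (\<integral>x. cmod (S k f x) powr p \<partial>M))"
      apply (simp only: i3 i4) using add_mono[OF i1 i2] by simp
  qed
qed

lemma part2_pair:
  assumes p: "0 < p" "p < 2" and fi: "strongly_forward_isometric A M p S"
    and ps: "p_standard A M p S"
    and j: "j \<in> gens A" and k: "k \<in> gens A" and jk: "j \<noteq> k"
    and f: "f \<in> Lp M p" and nf: "Lpnorm M p f = 1"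
  shows "AE x in M. S j f x * S k f x = 0"
proof -
  have p0: "0 < p" using p by simp
  have ij: "isometry_op M p (S j)" and ik: "isometry_op M p (S k)"
    using fi j k by (auto simp: forward_isometric_def strongly_forward_isometric_def)
  then have bj: "bop M p (S j)" and bk: "bop M p (S k)" by (auto simp: isometry_op_def)
  have nj: "\<And>g. g \<in> Lp M p \<Longrightarrow> Lpnorm M p (S j g) = Lpnorm M p g"
    and nk: "\<And>g. g \<in> Lp M p \<Longrightarrow> Lpnorm M p (S k g) = Lpnorm M p g"
    using ij ik by (auto simp: isometry_op_def)
  have bound: "Lpnorm M p (\<lambda>x. S j f x + e * S k f x) = 2 powr (1/p)" if e: "cmod e = 1" for e
  proof -
    let ?lam = "\<lambda>i. if i = j then 1 else if i = k then e else 0"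
    have e0: "e \<noteq> 0" using e by auto
    have sl: "s_lam S ?lam = (\<lambda>g x. S j g x + e * S k g x)"
      by (rule ext) (rule s_lam_pair[OF jk e0])
    have co: "coeffs A ?lam" by (rule pair_coeffs[OF j k jk e0])
    obtain c V where V: "isometry_op M p V" and cV: "\<forall>g\<in>Lp M p. aeq M (s_lam S ?lam g) (\<lambda>x. c * V g x)"
      using fi co unfolding strongly_forward_isometric_def by blast
    have nT: "Lpnorm M p (\<lambda>x. S j g x + e * S k g x) = cmod c * Lpnorm M p g" if g: "g \<in> Lp M p" for g
    proof -
      have ae: "AE x in M. S j g x + e * S k g x = c * V g x" using cV g sl by (auto simp: aeq_def)
      have m1: "(\<lambda>x. S j g x + e * S k g x) \<in> borel_measurable M"
        using Lp_meas[OF Lp_add[OF _ bop_Lp[OF bj g] Lp_scale[OF _ bop_Lp[OF bk g]]]] p0 by auto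
      have bV: "bop M p V" using V by (simp add: isometry_op_def)
      have m2: "(\<lambda>x. c * V g x) \<in> borel_measurable M"
        using Lp_meas[OF Lp_scale[OF _ bop_Lp[OF bV g]]] p0 by auto
      have "Lpnorm M p (\<lambda>x. S j g x + e * S k g x) = Lpnorm M p (\<lambda>x. c * V g x)"
        by (rule Lpnorm_cong[OF m1 m2 ae])
      also have "\<dots> = cmod c * Lpnorm M p g"
        using Lpnorm_scale[OF p0, of M c "V g"] V g unfolding isometry_op_def by auto
      finally show ?thesis .
    qed
    have "opnorm M p (\<lambda>g x. S j g x + e * S k g x) = cmod c"
      by (rule opnorm_eq[OF f nf]) (use nT in auto)
    moreover have "opnorm M p (s_lam S ?lam) = seq_pnorm p ?lam" using ps co by (simp add: p_standard_def)
    ultimately have "cmod c = 2 powr (1/p)" using sl pair_seq_pnorm[OF jk e] by simp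
    then show ?thesis using nT[OF f] nf by simp
  qed
  have i1: "(\<integral>x. cmod (S j f x + S k f x) powr p \<partial>M) = 2"
    using int_from_Lpnorm_eq[OF p0 bound[of 1]] by simp
  have i2: "(\<integral>x. cmod (S j f x - S k f x) powr p \<partial>M) = 2"
    using int_from_Lpnorm_eq[OF p0 bound[of "-1"]] by simp
  have i3: "(\<integral>x. cmod (S j f x) powr p \<partial>M) = 1" using int_one[OF p0] nj[OF f] nf by simp
  have i4: "(\<integral>x. cmod (S k f x) powr p \<partial>M) = 1" using int_one[OF p0] nk[OF f] nf by simp
  show ?thesis
  proof (rule key_lt2[OF p bop_Lp[OF bj f] bop_Lp[OF bk f]])
    show "2 * ((\<integral>x. cmod (S j f x) powr p \<partial>M) + (\<integral>x. cmod (S k f x) powr p \<partial>M))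
        \<le> (\<integral>x. cmod (S j f x + S k f x) powr p \<partial>M) + (\<integral>x. cmod (S j f x - S k f x) powr p \<partial>M)"
      apply (simp only: i3 i4 i1 i2) by simp
  qed
qed




lemma ess_union:
  assumes sf: "sigma_finite_measure M" and F: "F \<subseteq> sets M" "F \<noteq> {}"
  shows "\<exists>A::nat \<Rightarrow> 'a set. range A \<subseteq> F \<and> (\<forall>B\<in>F. B - (\<Union>n. A n) \<in> null_sets M)"
proof -
  interpret sigma_finite_measure M by fact
  obtain h where hb: "h \<in> borel_measurable M" and fin: "integral\<^sup>N M h \<noteq> \<infinity>"
    and pos: "\<And>x. x \<in> space M \<Longrightarrow> 0 < h x"
    using Ex_finite_integrable_function by auto
  define N where "N = density M h"
  have eqI: "(\<integral>\<^sup>+x\<in>space M. h x \<partial>M) = integral\<^sup>N M h"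
    by (intro nn_integral_cong) (simp add: indicator_def)
  interpret N: finite_measure N
    unfolding N_def using fin hb pos eqI
    by (intro finite_measureI) (simp add: emeasure_density)
  have sN: "sets N = sets M" by (simp add: N_def)
  have nullN: "B \<in> null_sets M" if "B \<in> null_sets N" for B
  proof -
    have "B \<in> sets M" and ae: "AE x in M. x \<in> B \<longrightarrow> h x = 0"
      using that null_sets_density_iff[OF hb] unfolding N_def by auto
    have "AE x in M. x \<notin> B" using ae AE_space
    proof eventually_elim
      case (elim x) then show ?case using pos[of x] by auto
    qed
    then show ?thesis using \<open>B \<in> sets M\<close> by (simp add: AE_iff_null_sets)
  qed
  define Q where "Q = {measure N (\<Union>n. A n) | A :: nat \<Rightarrow> 'a set. range A \<subseteq> F}"
  have bdd: "bdd_above Q" unfolding Q_def by (auto intro!: bdd_aboveI[where M="measure N (space N)"] N.bounded_measure)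
  obtain B0 where B0: "B0 \<in> F" using F by auto
  have Qne: "Q \<noteq> {}" unfolding Q_def using B0 by (auto intro!: exI[where x="\<lambda>_. B0"])
  define s where "s = Sup Q"
  have "\<forall>n::nat. \<exists>A::nat \<Rightarrow> 'a set. range A \<subseteq> F \<and> s - 1/Suc n < measure N (\<Union>i. A i)"
  proof
    fix n :: nat
    have "s - 1/Suc n < Sup Q" by (simp add: s_def)
    then obtain q where "q \<in> Q" "s - 1/Suc n < q" using less_cSup_iff[OF Qne bdd] by auto
    then obtain A :: "nat \<Rightarrow> 'a set" where "range A \<subseteq> F" "s - 1/Suc n < measure N (\<Union>i. A i)" unfolding Q_def by auto
    then show "\<exists>A::nat \<Rightarrow> 'a set. range A \<subseteq> F \<and> s - 1/Suc n < measure N (\<Union>i. A i)" by (intro exI[of _ A]) simp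
  qed
  then have "\<exists>AA::nat \<Rightarrow> nat \<Rightarrow> 'a set. \<forall>n. range (AA n) \<subseteq> F \<and> s - 1/Suc n < measure N (\<Union>i. AA n i)" by (rule choice)
  then obtain AA :: "nat \<Rightarrow> nat \<Rightarrow> 'a set" where AA0: "\<forall>n. range (AA n) \<subseteq> F \<and> s - 1/Suc n < measure N (\<Union>i. AA n i)" by blast
  have AA: "\<And>n. range (AA n) \<subseteq> F" "\<And>n. s - 1/Suc n < measure N (\<Union>i. AA n i)"
    using AA0 by auto
  define A where "A k = (case prod_decode k of (n,m) \<Rightarrow> AA n m)" for k
  have rA: "range A \<subseteq> F" using AA(1) by (auto simp: A_def image_subset_iff split: prod.splits)
  define U where "U = (\<Union>k. A k)"
  have Um: "U \<in> sets M" unfolding U_def using rA F by (intro sets.countable_UN) auto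
  have sub: "(\<Union>i. AA n i) \<subseteq> U" for n
  proof
    fix x assume "x \<in> (\<Union>i. AA n i)"
    then obtain i where "x \<in> AA n i" by auto
    moreover have "A (prod_encode (n,i)) = AA n i" by (simp add: A_def)
    ultimately show "x \<in> U" unfolding U_def by blast
  qed
  have le: "measure N U \<le> s" unfolding s_def U_def
    by (rule cSup_upper[OF _ bdd]) (use rA Q_def in auto)
  have ge: "s - 1/Suc n < measure N U" for n
  proof -
    have "(\<Union>i. AA n i) \<in> sets M" using AA(1)[of n] F by (intro sets.countable_UN) auto
    then have "measure N (\<Union>i. AA n i) \<le> measure N U"
      using sub Um sN by (intro N.finite_measure_mono) auto
    then show ?thesis using AA(2)[of n] by simp
  qed
  have eqs: "measure N U = s"
  proof (rule ccontr)
    assume "measure N U \<noteq> s"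
    then have "0 < s - measure N U" using le by simp
    then obtain n where "inverse (real (Suc n)) < s - measure N U" using reals_Archimedean by blast
    then show False using ge[of n] by (simp add: field_simps)
  qed
  have "\<forall>B\<in>F. B - U \<in> null_sets M"
  proof
    fix B assume B: "B \<in> F"
    then have Bm: "B \<in> sets M" using F by auto
    define A' :: "nat \<Rightarrow> 'a set" where "A' = case_nat B A"
    have rA': "range A' \<subseteq> F" using rA B by (auto simp: A'_def image_subset_iff split: nat.splits)
    have UA': "(\<Union>n. A' n) = U \<union> (B - U)"
    proof (rule equalityI)
      show "(\<Union>n. A' n) \<subseteq> U \<union> (B - U)" by (auto simp: A'_def U_def split: nat.splits)
      show "U \<union> (B - U) \<subseteq> (\<Union>n. A' n)"
      proof
        fix x assume "x \<in> U \<union> (B - U)"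
        then have "x \<in> A' 0 \<or> (\<exists>k. x \<in> A' (Suc k))" by (auto simp: A'_def U_def)
        then show "x \<in> (\<Union>n. A' n)" by blast
      qed
    qed
    have "measure N (\<Union>n. A' n) \<le> s" unfolding s_def
      by (rule cSup_upper[OF _ bdd]) (use rA' Q_def in auto)
    moreover have "measure N (U \<union> (B - U)) = measure N U + measure N (B - U)"
      using Um Bm sN by (intro N.finite_measure_Union) auto
    ultimately have "measure N (B - U) \<le> 0" using UA' eqs by simp
    then have "measure N (B - U) = 0" using measure_nonneg[of N "B - U"] by simp
    then have "B - U \<in> null_sets N" using Bm Um sN by (auto simp: N.emeasure_eq_measure)
    then show "B - U \<in> null_sets M" by (rule nullN)
  qed
  then show ?thesis using rA unfolding U_def by blast
qed




lemma disjoint_assembly: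
  assumes sf: "sigma_finite_measure M"
    and bops: "\<And>j. j \<in> gens A \<Longrightarrow> bop M p (S j)"
    and orth: "\<And>j k f g. j \<in> gens A \<Longrightarrow> k \<in> gens A \<Longrightarrow> j \<noteq> k \<Longrightarrow> f \<in> Lp M p \<Longrightarrow> g \<in> Lp M p
        \<Longrightarrow> AE x in M. S j f x * S k g x = 0"
  shows "disjoint_rep A M p S"
proof -
  define supp where "supp j f = {x \<in> space M. S j f x \<noteq> 0}" for j f
  have suppm: "supp j f \<in> sets M" if "j \<in> gens A" "f \<in> Lp M p" for j f
  proof -
    have "S j f \<in> borel_measurable M" using Lp_meas[OF bop_Lp[OF bops[OF that(1)] that(2)]] .
    then show ?thesis unfolding supp_def by measurable
  qed
  have "\<forall>j\<in>gens A. \<exists>B::nat \<Rightarrow> 'a set. range B \<subseteq> supp j ` Lp M p \<and>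
          (\<forall>C\<in>supp j ` Lp M p. C - (\<Union>n. B n) \<in> null_sets M)"
  proof
    fix j assume j: "j \<in> gens A"
    show "\<exists>B::nat \<Rightarrow> 'a set. range B \<subseteq> supp j ` Lp M p \<and>
          (\<forall>C\<in>supp j ` Lp M p. C - (\<Union>n. B n) \<in> null_sets M)"
      by (rule ess_union[OF sf]) (use suppm[OF j] Lp_zero in auto)
  qed
  then obtain B :: "nat \<Rightarrow> nat \<Rightarrow> 'a set" where
    B: "\<And>j. j \<in> gens A \<Longrightarrow> range (B j) \<subseteq> supp j ` Lp M p"
    and Bn: "\<And>j C. j \<in> gens A \<Longrightarrow> C \<in> supp j ` Lp M p \<Longrightarrow> C - (\<Union>n. B j n) \<in> null_sets M"
    by metis
  have "\<forall>j\<in>gens A. \<forall>n. \<exists>f. f \<in> Lp M p \<and> B j n = supp j f" using B by blast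
  then obtain fs :: "nat \<Rightarrow> nat \<Rightarrow> 'a \<Rightarrow> complex" where
    fs: "\<And>j n. j \<in> gens A \<Longrightarrow> fs j n \<in> Lp M p \<and> B j n = supp j (fs j n)"
    by metis
  define U where "U j = (\<Union>n. B j n)" for j
  have Um: "U j \<in> sets M" if "j \<in> gens A" for j
    unfolding U_def using fs[OF that] suppm[OF that] by (intro sets.countable_UN) auto
  define I where "I = {(j,k). j \<in> gens A \<and> k \<in> gens A \<and> j \<noteq> k}"
  have pairnull: "U j \<inter> U k \<in> null_sets M" if jk: "(j,k) \<in> I" for j k
  proof -
    have j: "j \<in> gens A" and k: "k \<in> gens A" and ne: "j \<noteq> k" using jk by (auto simp: I_def)
    have 1: "AE x in M. S j (fs j n) x * S k (fs k m) x = 0" for n m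
      using orth[OF j k ne] fs[OF j] fs[OF k] by blast
    have "AE x in M. \<forall>n. \<forall>m. S j (fs j n) x * S k (fs k m) x = 0"
      apply (rule AE_all_countable[THEN iffD2], rule allI)
      apply (rule AE_all_countable[THEN iffD2], rule allI)
      by (rule 1)
    then have "AE x in M. x \<notin> U j \<inter> U k"
    proof eventually_elim
      case (elim x)
      show ?case
      proof
        assume "x \<in> U j \<inter> U k"
        then obtain n m where "x \<in> B j n" "x \<in> B k m" by (auto simp: U_def)
        then have "S j (fs j n) x \<noteq> 0" "S k (fs k m) x \<noteq> 0" using fs[OF j, of n] fs[OF k, of m]
          by (auto simp: supp_def)
        then show False using elim by auto
      qed
    qed
    then show ?thesis using Um[OF j] Um[OF k] by (subst AE_iff_null_sets) auto
  qed
  define Nn where "Nn = (\<Union>jk\<in>I. U (fst jk) \<inter> U (snd jk))"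
  have Nn: "Nn \<in> null_sets M" unfolding Nn_def
    by (rule null_sets_UN') (use pairnull in auto)
  define X where "X j = U j - Nn" for j
  show ?thesis unfolding disjoint_rep_def
  proof (intro exI[of _ X] conjI ballI)
    fix j assume "j \<in> gens A" then show "X j \<in> sets M" using Um Nn by (auto simp: X_def)
  next
    show "disjoint_family_on X (gens A)"
      unfolding disjoint_family_on_def
    proof (intro ballI impI)
      fix j k assume "j \<in> gens A" "k \<in> gens A" "j \<noteq> k"
      then have "(j,k) \<in> I" by (simp add: I_def)
      then have "U j \<inter> U k \<subseteq> Nn" unfolding Nn_def by force
      then show "X j \<inter> X k = {}" by (auto simp: X_def)
    qed
  next
    fix j f assume j: "j \<in> gens A" and f: "f \<in> Lp M p"
    have "supp j f - U j \<in> null_sets M" using Bn[OF j] f by (auto simp: U_def)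
    then have "AE x in M. x \<notin> supp j f - U j" by (rule AE_not_in)
    moreover have "AE x in M. x \<notin> Nn" using Nn by (rule AE_not_in)
    ultimately show "AE x in M. x \<notin> X j \<longrightarrow> S j f x = 0" using AE_space
    proof eventually_elim
      case (elim x)
      then show ?case by (auto simp: X_def supp_def)
    qed
  qed
qed

theorem lemma7p10:
  fixes A :: alg and M :: "'a measure" and p :: real
    and S T :: "nat \<Rightarrow> ('a \<Rightarrow> complex) \<Rightarrow> ('a \<Rightarrow> complex)"
  assumes "admissible_alg A"
    and "p \<ge> 1" and "p \<noteq> 2"
    and "sigma_finite_measure M"
    and "is_rep A M p S T"
  shows "(p > 2 \<and> forward_isometric A M p S
            \<and> (\<forall>lam. coeffs A lam \<longrightarrow> opnorm M p (s_lam S lam) \<le> seq_pnorm p lam)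
          \<longrightarrow> disjoint_rep A M p S)
       \<and> (p < 2 \<and> strongly_forward_isometric A M p S \<and> p_standard A M p S
          \<longrightarrow> disjoint_rep A M p S)"
proof -
  have p0: "0 < p" using assms(2) by simp
  have bops: "\<And>j. j \<in> gens A \<Longrightarrow> bop M p (S j)" using assms(5) by (simp add: is_rep_def)
  show ?thesis
  proof (intro conjI impI)
    assume H: "2 < p \<and> forward_isometric A M p S
            \<and> (\<forall>lam. coeffs A lam \<longrightarrow> opnorm M p (s_lam S lam) \<le> seq_pnorm p lam)"
    show "disjoint_rep A M p S"
    proof (rule disjoint_assembly[OF assms(4) bops])
      fix j k f g assume j: "j \<in> gens A" and k: "k \<in> gens A" and ne: "j \<noteq> k"
        and f: "f \<in> Lp M p" and g: "g \<in> Lp M p"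
      show "AE x in M. S j f x * S k g x = 0"
      proof (rule polarize[OF _ bops[OF j] bops[OF k] _ f g])
        fix h assume h: "h \<in> Lp M p"
        show "AE x in M. S j h x * S k h x = 0"
          by (rule normalize_pair[OF p0 bops[OF j] bops[OF k] _ h])
             (use part1_pair[of p A M S j k] H j k ne in auto)
      qed (use p0 in auto)
    qed
  next
    assume H: "p < 2 \<and> strongly_forward_isometric A M p S \<and> p_standard A M p S"
    show "disjoint_rep A M p S"
    proof (rule disjoint_assembly[OF assms(4) bops])
      fix j k f g assume j: "j \<in> gens A" and k: "k \<in> gens A" and ne: "j \<noteq> k"
        and f: "f \<in> Lp M p" and g: "g \<in> Lp M p"
      show "AE x in M. S j f x * S k g x = 0"
      proof (rule polarize[OF _ bops[OF j] bops[OF k] _ f g])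
        fix h assume h: "h \<in> Lp M p"
        show "AE x in M. S j h x * S k h x = 0"
          by (rule normalize_pair[OF p0 bops[OF j] bops[OF k] _ h])
             (use part2_pair[of p A M S j k] H p0 j k ne in auto)
      qed (use p0 in auto)
    qed
  qed
qed


end
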